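(* Let $k$, $\Lambda_{\mathbf q}$, $G$, $\chi_{g,l}$, $\mathbb K$, $\Delta_{\mathbb K}$ and the cochains $(x^\alpha\otimes g)\epsilon_\beta^*$ be as in the context, and let the cup product of cochains $f,g'\in\operatorname{Hom}_{\Lambda_{\mathbf q}^e}(\mathbb K,\Lambda_{\mathbf q}\rtimes G)$ be $f\smile g'=\mu\circ(f\otimes_{\Lambda_{\mathbf q}}g')\circ\Delta_{\mathbb K}$, where $\mu$ is multiplication in $\Lambda_{\mathbf q}\rtimes G$. If $\alpha,\gamma\in\{0,1\}^n$, $\beta,\kappa\in\mathbb N^n$ and $g,h\in G$, then $$(x^\alpha\otimes g)\epsilon_\beta^*\smile(x^\gamma\otimes h)\epsilon_\kappa^*=\prod_{l=1}^n\Big(\chi_{g,l}^{\gamma_l}\prod_{k<l}q_{k,l}^{\kappa_k\beta_l-\gamma_k\alpha_l}(-1)^{-\gamma_k\alpha_l}\Big)(x^{\alpha+\gamma}\otimes gh)\epsilon_{\beta+\kappa}^*.$$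
   Context: $k$ is a field of characteristic $0$. Fix $n\ge1$, $q_{i,j}\in k^*$ with $q_{j,i}=q_{i,j}^{-1}$, $q_{i,i}=-1$, and $\Lambda_{\mathbf q}=k\langle x_1,\dots,x_n\mid x_ix_j=-q_{i,j}x_jx_i,\ x_i^2=0\rangle$. For $\alpha\in\mathbb N^n$, $x^\alpha=x_1^{\alpha_1}\cdots x_n^{\alpha_n}$ (which is $0$ if some $\alpha_i\ge2$). $G$ is a finite group acting by algebra automorphisms with ${}^gx_i=\chi_{g,i}x_i$. $\Lambda_{\mathbf q}\rtimes G=\Lambda_{\mathbf q}\otimes kG$ with $(\lambda\otimes g)(\lambda'\otimes h)=\lambda({}^g\lambda')\otimes gh$, a $\Lambda_{\mathbf q}$-bimodule via $\lambda\mapsto\lambda\otimes1$. For $\beta\in\mathbb N^n$, $|\beta|=\sum\beta_i$, $[j]$ is the $j$-th unit vector. $\mathbb K$ is the projective $\Lambda_{\mathbf q}^e$-resolution of $\Lambda_{\mathbf q}$ with $\mathbb K_m=\bigoplus_{|\beta|=m}\Lambda_{\mathbf q}\epsilon_\beta\Lambda_{\mathbf q}$ (free on $\epsilon_\beta$), differential $\delta(\epsilon_\beta)=\sum_{j=1}^n\big(\prod_{l<j}q_{l,j}^{\beta_l}x_j\epsilon_{\beta-[j]}+(-1)^{\sum_{l\le j}\beta_l}\prod_{l>j}(-q_{j,l})^{\beta_l}\epsilon_{\beta-[j]}x_j\big)$ ($\epsilon_{\beta-[j]}:=0$ if $\beta_j=0$), augmentation $\epsilon_0\mapsto1$. It carries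 the diagonal $\Delta_{\mathbb K}:\mathbb K\to\mathbb K\otimes_{\Lambda_{\mathbf q}}\mathbb K$, $\Delta_{\mathbb K}(\epsilon_\beta)=\sum_{\alpha+\gamma=\beta}\prod_{1\le k<l\le n}q_{k,l}^{\gamma_k\alpha_l}\,\epsilon_\alpha\otimes_{\Lambda_{\mathbf q}}\epsilon_\gamma$ (sum over $\alpha,\gamma\in\mathbb N^n$); this corresponds to the restriction of the bar-resolution diagonal under the identification $\epsilon_\beta\mapsto 1\otimes f_\beta\otimes1$ of $\mathbb K$ with a subcomplex of the bar resolution, so the cup product defined with $\Delta_{\mathbb K}$ induces the usual cup product on $\mathrm{HH}^*(\Lambda_{\mathbf q},\Lambda_{\mathbf q}\rtimes G)$. The cochain $(x^\alpha\otimes g)\epsilon_\beta^*\in\operatorname{Hom}_{\Lambda_{\mathbf q}^e}(\mathbb K_{|\beta|},\Lambda_{\mathbf q}\rtimes G)$ sends $\epsilon_\beta\mapsto x^\alpha\otimes g$ and all other $\epsilon_{\beta'}\mapsto0$. *)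

theory Defs
  imports "HOL-Algebra.Group"
begin

text \<open>Multi-indices in N^n are functions nat => nat supported on {1..n}.
  Exterior exponents ({0,1}^n) additionally take values at most 1.\<close>

definition multi :: "nat \<Rightarrow> (nat \<Rightarrow> nat) set" where
  "multi n = {\<beta>. \<forall>i. \<beta> i \<noteq> 0 \<longrightarrow> 1 \<le> i \<and> i \<le> n}"

definition bits :: "nat \<Rightarrow> (nat \<Rightarrow> nat) set" where
  "bits n = {\<alpha>. \<alpha> \<in> multi n \<and> (\<forall>i. \<alpha> i \<le> 1)}"

text \<open>Normal-form multiplication in the quantum exterior algebra, derived from the
  defining relations x_i x_j = -q_ij x_j x_i and x_i^2 = 0:
  left multiplication of the generator x_i on a normal monomial x^gamma
  (with gamma in bits) moves x_i past x_j (j < i) picking up -q_ij each time,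
  and gives 0 if x_i already occurs.
  lmc q alpha m gamma = (c, delta) means
  x_1^alpha_1 ... x_m^alpha_m * x^gamma = c * x^delta.\<close>

fun lmc :: "(nat \<Rightarrow> nat \<Rightarrow> 'k::field) \<Rightarrow> (nat \<Rightarrow> nat) \<Rightarrow> nat \<Rightarrow> (nat \<Rightarrow> nat)
             \<Rightarrow> 'k \<times> (nat \<Rightarrow> nat)" where
  "lmc q \<alpha> 0 \<gamma> = (1, \<gamma>)"
| "lmc q \<alpha> (Suc m) \<gamma> =
     (let (c1, \<delta>) =
        (if \<alpha> (Suc m) = 0 then (1, \<gamma>)
         else if \<gamma> (Suc m) = 0
           then ((\<Prod>j\<in>{1..m}. (- q (Suc m) j) ^ (\<gamma> j)), \<gamma>(Suc m := 1))
           else (0, \<gamma>(Suc m := Suc (\<gamma> (Suc m)))));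
          (c2, \<epsilon>) = lmc q \<alpha> m \<delta>
      in (c2 * c1, \<epsilon>))"

text \<open>Elements of Lambda_q # G: coefficient functions on the basis
  {x^alpha \<otimes> g | alpha in bits n, g in carrier G}.
  xb n alpha g is the element x^alpha \<otimes> g (zero if alpha is not a 0/1 vector).\<close>

type_synonym ('k, 'g) skew = "(nat \<Rightarrow> nat) \<times> 'g \<Rightarrow> 'k"

definition xb :: "nat \<Rightarrow> (nat \<Rightarrow> nat) \<Rightarrow> 'g \<Rightarrow> ('k::field, 'g) skew" where
  "xb n \<alpha> g = (\<lambda>(\<delta>, k). if \<alpha> \<in> bits n \<and> \<delta> = \<alpha> \<and> k = g then 1 else 0)"

text \<open>Product of basis elements:
  (x^alpha \<otimes> g)(x^gamma \<otimes> h) = x^alpha (g.x^gamma) \<otimes> gh, with g.x_l = chi g l * x_l.\<close>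

definition bprod :: "('g, 'b) monoid_scheme \<Rightarrow> nat \<Rightarrow> (nat \<Rightarrow> nat \<Rightarrow> 'k::field)
    \<Rightarrow> ('g \<Rightarrow> nat \<Rightarrow> 'k) \<Rightarrow> (nat \<Rightarrow> nat) \<times> 'g \<Rightarrow> (nat \<Rightarrow> nat) \<times> 'g \<Rightarrow> ('k, 'g) skew" where
  "bprod G n q \<chi> x z =
     (case x of (\<alpha>, g) \<Rightarrow> case z of (\<gamma>, h) \<Rightarrow>
        (let (c, \<delta>) = lmc q \<alpha> n \<gamma>
         in (\<lambda>y. c * (\<Prod>l\<in>{1..n}. \<chi> g l ^ \<gamma> l) * xb n \<delta> (g \<otimes>\<^bsub>G\<^esub> h) y)))"

definition smul :: "('g, 'b) monoid_scheme \<Rightarrow> nat \<Rightarrow> (nat \<Rightarrow> nat \<Rightarrow> 'k::field)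
    \<Rightarrow> ('g \<Rightarrow> nat \<Rightarrow> 'k) \<Rightarrow> ('k, 'g) skew \<Rightarrow> ('k, 'g) skew \<Rightarrow> ('k, 'g) skew" where
  "smul G n q \<chi> a b = (\<lambda>y. \<Sum>x\<in>bits n \<times> carrier G. \<Sum>z\<in>bits n \<times> carrier G.
       a x * b z * bprod G n q \<chi> x z y)"

text \<open>A cochain in Hom_{Lambda^e}(K, Lambda # G) is determined by its values on the
  free generators epsilon_beta, beta in N^n.\<close>

type_synonym ('k, 'g) cochain = "(nat \<Rightarrow> nat) \<Rightarrow> ('k, 'g) skew"

definition ecoch :: "nat \<Rightarrow> (nat \<Rightarrow> nat) \<Rightarrow> 'g \<Rightarrow> (nat \<Rightarrow> nat) \<Rightarrow> ('k::field, 'g) cochain" where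
  "ecoch n \<alpha> g \<beta> = (\<lambda>\<beta>'. if \<beta>' = \<beta> then xb n \<alpha> g else (\<lambda>_. 0))"

text \<open>Cup product f \<smile> f' = mu o (f \<otimes> f') o Delta_K, with
  Delta_K(eps_beta) = sum_{a + c = beta} prod_{k<l} q_kl^(c_k a_l) eps_a \<otimes> eps_c.\<close>

definition cup :: "('g, 'b) monoid_scheme \<Rightarrow> nat \<Rightarrow> (nat \<Rightarrow> nat \<Rightarrow> 'k::field)
    \<Rightarrow> ('g \<Rightarrow> nat \<Rightarrow> 'k) \<Rightarrow> ('k, 'g) cochain \<Rightarrow> ('k, 'g) cochain \<Rightarrow> ('k, 'g) cochain" where
  "cup G n q \<chi> f f' = (\<lambda>\<beta> y.
     \<Sum>(a, c)\<in>{(a, c). a \<in> multi n \<and> c \<in> multi n \<and> (\<forall>i. a i + c i = \<beta> i)}.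
       (\<Prod>l\<in>{1..n}. \<Prod>k\<in>{1..<l}. q k l ^ (c k * a l)) * smul G n q \<chi> (f a) (f' c) y)"

end

theory Submission
  imports Defs
begin


lemma lmc_eq:
  "lmc q \<alpha> m \<gamma> =
   ((\<Prod>i\<in>{1..m}. if \<alpha> i = 0 then 1 else if \<gamma> i = 0
        then (\<Prod>j\<in>{1..<i}. (- q i j) ^ (\<gamma> j)) else 0),
    (\<lambda>i. if i \<in> {1..m} \<and> \<alpha> i \<noteq> 0 then (if \<gamma> i = 0 then 1 else Suc (\<gamma> i)) else \<gamma> i))"
proof (induction m arbitrary: \<gamma>)
  case 0
  then show ?case by simp
next
  case (Suc m)
  define F where "F = (\<lambda>\<gamma>::nat\<Rightarrow>nat. \<lambda>i. if \<alpha> i = 0 then 1 else if \<gamma> i = 0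
        then (\<Prod>j\<in>{1..<i}. (- q i j) ^ (\<gamma> j)) else 0)"
  define U where "U = (\<lambda>(\<gamma>::nat\<Rightarrow>nat) m. (\<lambda>i. if i \<in> {1..m} \<and> \<alpha> i \<noteq> 0 then (if \<gamma> i = 0 then 1 else Suc (\<gamma> i)) else \<gamma> i))"
  have IH: "\<And>\<delta>. lmc q \<alpha> m \<delta> = (\<Prod>i\<in>{1..m}. F \<delta> i, U \<delta> m)"
    using Suc.IH unfolding F_def U_def by simp
  have keep: "\<And>v. (\<Prod>i\<in>{1..m}. F (\<gamma>(Suc m := v)) i) = (\<Prod>i\<in>{1..m}. F \<gamma> i)"
    by (rule prod.cong) (auto simp: F_def intro!: prod.cong)
  have prodS: "(\<Prod>i\<in>{1..Suc m}. F \<gamma> i) = (\<Prod>i\<in>{1..m}. F \<gamma> i) * F \<gamma> (Suc m)"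
    by (simp add: prod.nat_ivl_Suc' mult.commute)
  have "lmc q \<alpha> (Suc m) \<gamma> = (\<Prod>i\<in>{1..Suc m}. F \<gamma> i, U \<gamma> (Suc m))"
  proof (cases "\<alpha> (Suc m) = 0")
    case True
    then show ?thesis using IH prodS
      by (auto simp: F_def U_def le_Suc_eq intro!: ext)
  next
    case a: False
    show ?thesis
    proof (cases "\<gamma> (Suc m) = 0")
      case True
      then show ?thesis using a IH prodS keep[of 1]
        by (auto simp: F_def U_def le_Suc_eq atLeastLessThanSuc_atLeastAtMost intro!: ext)
    next
      case False
      then show ?thesis using a IH prodS keep[of "Suc (\<gamma> (Suc m))"]
        by (auto simp: F_def U_def le_Suc_eq intro!: ext)
    qed
  qed
  then show ?case unfolding F_def U_def by simp
qed

lemma finite_bits: "finite (bits n)"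
proof -
  have "bits n \<subseteq> {f. \<forall>x. (x \<in> {1..n} \<longrightarrow> f x \<in> {0..1}) \<and> (x \<notin> {1..n} \<longrightarrow> f x = 0)}"
    unfolding bits_def multi_def by auto
  then show ?thesis by (rule finite_subset) (rule finite_set_of_finite_funs, auto)
qed

lemma finite_split: "finite {(a, c). a \<in> multi n \<and> c \<in> multi n \<and> (\<forall>i. a i + c i = b i)}"
proof -
  let ?B = "\<Union>i\<in>{1..n}. {0..b i}"
  let ?S = "{f. \<forall>x. (x \<in> {1..n} \<longrightarrow> f x \<in> ?B) \<and> (x \<notin> {1..n} \<longrightarrow> f x = 0)}"
  have fS: "finite ?S" by (rule finite_set_of_finite_funs) auto
  have "{(a, c). a \<in> multi n \<and> c \<in> multi n \<and> (\<forall>i. a i + c i = b i)} \<subseteq> ?S \<times> ?S"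
  proof
    fix p assume "p \<in> {(a, c). a \<in> multi n \<and> c \<in> multi n \<and> (\<forall>i. a i + c i = b i)}"
    then obtain a c where p: "p = (a, c)" and a: "a \<in> multi n" and c: "c \<in> multi n"
      and s: "\<forall>i. a i + c i = b i" by blast
    have "a \<in> ?S"
    proof (clarify, intro conjI impI)
      fix x assume x: "x \<in> {1..n}"
      have "a x \<in> {0..b x}" using s[rule_format, of x] by auto
      then show "a x \<in> ?B" using x by blast
    next
      fix x assume "x \<notin> {1..n}" then show "a x = 0" using a unfolding multi_def by auto
    qed
    moreover have "c \<in> ?S"
    proof (clarify, intro conjI impI)
      fix x assume x: "x \<in> {1..n}"
      have "c x \<in> {0..b x}" using s[rule_format, of x] by auto
      then show "c x \<in> ?B" using x by blast
    next
      fix x assume "x \<notin> {1..n}" then show "c x = 0" using c unfolding multi_def by auto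
    qed
    ultimately show "p \<in> ?S \<times> ?S" using p by simp
  qed
  then show ?thesis using finite_cartesian_product[OF fS fS] by (rule finite_subset)
qed


lemma elem_id:
  fixes x :: "'k::field"
  assumes "x \<noteq> 0"
  shows "x ^ a * (- inverse x) ^ b = x powi (int a - int b) * (-1) powi (- int b)"
proof -
  have 1: "(- inverse x) ^ b = (-1)^b * inverse (x ^ b)"
    by (metis power_minus power_inverse)
  have 2: "x powi (int a - int b) = x ^ a * inverse (x ^ b)"
    using assms by (simp add: power_int_diff power_int_of_nat divide_inverse)
  have "inverse ((-1::'k)^b) = (inverse (-1))^b" by (rule power_inverse[symmetric])
  then have 3: "((-1::'k)) powi (- int b) = (-1)^b"
    by (simp add: power_int_minus power_int_of_nat)
  show ?thesis unfolding 1 2 3 by (simp only: ac_simps)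
qed

lemma smul_xb:
  assumes "\<alpha> \<in> bits n" "\<gamma> \<in> bits n" "g \<in> carrier G" "h \<in> carrier G" "finite (carrier G)"
  shows "smul G n q \<chi> (xb n \<alpha> g) (xb n \<gamma> h) y = bprod G n q \<chi> (\<alpha>, g) (\<gamma>, h) y"
proof -
  have x1: "xb n \<alpha> g x = (if x = (\<alpha>, g) then 1 else 0)" for x using assms by (cases x) (simp add: xb_def)
  have x2: "xb n \<gamma> h x = (if x = (\<gamma>, h) then 1 else 0)" for x using assms by (cases x) (simp add: xb_def)
  let ?S = "bits n \<times> carrier G"
  have fS: "finite ?S" using assms finite_bits by blast
  have m: "(\<alpha>, g) \<in> ?S" "(\<gamma>, h) \<in> ?S" using assms by auto
  have "smul G n q \<chi> (xb n \<alpha> g) (xb n \<gamma> h) y =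
     (\<Sum>x\<in>?S. if x = (\<alpha>, g) then (\<Sum>z\<in>?S. if z = (\<gamma>, h) then bprod G n q \<chi> x z y else 0) else 0)"
    unfolding smul_def x1 x2 by (intro sum.cong refl) (auto intro!: sum.cong)
  also have "\<dots> = bprod G n q \<chi> (\<alpha>, g) (\<gamma>, h) y"
    using fS m by simp
  finally show ?thesis .
qed

theorem theorem3p4:
  fixes G :: "('g, 'b) monoid_scheme"
    and n :: nat
    and q :: "nat \<Rightarrow> nat \<Rightarrow> 'k::field_char_0"
    and \<chi> :: "'g \<Rightarrow> nat \<Rightarrow> 'k"
    and \<alpha> \<gamma> \<beta> \<kappa> :: "nat \<Rightarrow> nat"
    and g h :: 'g
  assumes n: "n \<ge> 1"
    and q_nz: "\<And>i j. i \<in> {1..n} \<Longrightarrow> j \<in> {1..n} \<Longrightarrow> q i j \<noteq> 0"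
    and q_inv: "\<And>i j. i \<in> {1..n} \<Longrightarrow> j \<in> {1..n} \<Longrightarrow> q j i = inverse (q i j)"
    and q_diag: "\<And>i. i \<in> {1..n} \<Longrightarrow> q i i = -1"
    and grp: "group G"
    and fin: "finite (carrier G)"
    and chi_nz: "\<And>g i. g \<in> carrier G \<Longrightarrow> i \<in> {1..n} \<Longrightarrow> \<chi> g i \<noteq> 0"
    and chi_one: "\<And>i. i \<in> {1..n} \<Longrightarrow> \<chi> \<one>\<^bsub>G\<^esub> i = 1"
    and chi_mult: "\<And>g h i. g \<in> carrier G \<Longrightarrow> h \<in> carrier G \<Longrightarrow> i \<in> {1..n} \<Longrightarrow>
                     \<chi> (g \<otimes>\<^bsub>G\<^esub> h) i = \<chi> g i * \<chi> h i"
    and \<alpha>: "\<alpha> \<in> bits n" and \<gamma>: "\<gamma> \<in> bits n"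
    and \<beta>: "\<beta> \<in> multi n" and \<kappa>: "\<kappa> \<in> multi n"
    and g: "g \<in> carrier G" and h: "h \<in> carrier G"
  shows "cup G n q \<chi> (ecoch n \<alpha> g \<beta>) (ecoch n \<gamma> h \<kappa>) =
    (\<lambda>\<beta>' y. (\<Prod>l\<in>{1..n}. \<chi> g l ^ \<gamma> l *
                 (\<Prod>k\<in>{1..<l}. q k l powi (int (\<kappa> k * \<beta> l) - int (\<gamma> k * \<alpha> l))
                               * (-1) powi (- int (\<gamma> k * \<alpha> l))))
             * ecoch n (\<lambda>i. \<alpha> i + \<gamma> i) (g \<otimes>\<^bsub>G\<^esub> h) (\<lambda>i. \<beta> i + \<kappa> i) \<beta>' y)"
proof (intro ext)
  fix \<beta>' y
  let ?P = "\<Prod>l\<in>{1..n}. \<Prod>k\<in>{1..<l}. q k l ^ (\<kappa> k * \<beta> l)"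
  let ?S = "{(a, c). a \<in> multi n \<and> c \<in> multi n \<and> (\<forall>i. a i + c i = \<beta>' i)}"
  let ?T = "\<lambda>(a, c). (\<Prod>l\<in>{1..n}. \<Prod>k\<in>{1..<l}. q k l ^ (c k * a l)) *
              smul G n q \<chi> (ecoch n \<alpha> g \<beta> a) (ecoch n \<gamma> h \<kappa> c) y"
  let ?X = "\<Prod>l\<in>{1..n}. \<chi> g l ^ \<gamma> l"
  let ?ab = "\<lambda>i. \<alpha> i + \<gamma> i"
  have zero: "smul G n q \<chi> (\<lambda>_. 0) b y = 0" "smul G n q \<chi> b (\<lambda>_. 0) y = 0" for b
    by (simp_all add: smul_def)
  have cupv: "cup G n q \<chi> (ecoch n \<alpha> g \<beta>) (ecoch n \<gamma> h \<kappa>) \<beta>' y = sum ?T ?S"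
    unfolding cup_def by simp
  have step1: "cup G n q \<chi> (ecoch n \<alpha> g \<beta>) (ecoch n \<gamma> h \<kappa>) \<beta>' y =
      (if \<beta>' = (\<lambda>i. \<beta> i + \<kappa> i) then ?P * bprod G n q \<chi> (\<alpha>, g) (\<gamma>, h) y else 0)"
  proof (cases "\<beta>' = (\<lambda>i. \<beta> i + \<kappa> i)")
    case True
    have mem: "(\<beta>, \<kappa>) \<in> ?S" using True \<beta> \<kappa> by auto
    have "sum ?T ?S = ?T (\<beta>, \<kappa>) + sum ?T (?S - {(\<beta>, \<kappa>)})"
      using finite_split mem by (rule sum.remove)
    also have "sum ?T (?S - {(\<beta>, \<kappa>)}) = 0"
      by (rule sum.neutral) (auto simp: ecoch_def zero split: if_splits)
    also have "?T (\<beta>, \<kappa>) = ?P * bprod G n q \<chi> (\<alpha>, g) (\<gamma>, h) y"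
      by (simp add: ecoch_def smul_xb[OF \<alpha> \<gamma> g h fin])
    finally show ?thesis using True cupv by simp
  next
    case False
    have "sum ?T ?S = 0"
      by (rule sum.neutral) (use False in \<open>auto simp: ecoch_def zero split: if_splits\<close>)
    then show ?thesis using False cupv by simp
  qed
  define F where "F = (\<lambda>i. if \<alpha> i = 0 then 1 else if \<gamma> i = 0
        then (\<Prod>j\<in>{1..<i}. (- q i j) ^ (\<gamma> j)) else (0::'k))"
  define U where "U = (\<lambda>i. if i \<in> {1..n} \<and> \<alpha> i \<noteq> 0 then (if \<gamma> i = 0 then 1 else Suc (\<gamma> i)) else \<gamma> i)"
  have bp: "bprod G n q \<chi> (\<alpha>, g) (\<gamma>, h) y = (\<Prod>i\<in>{1..n}. F i) * ?X * xb n U (g \<otimes>\<^bsub>G\<^esub> h) y"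
    unfolding bprod_def lmc_eq F_def U_def by simp
  have a01: "\<alpha> i \<le> 1" "\<gamma> i \<le> 1" for i using \<alpha> \<gamma> unfolding bits_def by auto
  have aout: "\<alpha> i = 0" "\<gamma> i = 0" if "i \<notin> {1..n}" for i
    using \<alpha> \<gamma> that unfolding bits_def multi_def by auto
  show "cup G n q \<chi> (ecoch n \<alpha> g \<beta>) (ecoch n \<gamma> h \<kappa>) \<beta>' y =
    (\<Prod>l\<in>{1..n}. \<chi> g l ^ \<gamma> l *
                 (\<Prod>k\<in>{1..<l}. q k l powi (int (\<kappa> k * \<beta> l) - int (\<gamma> k * \<alpha> l))
                               * (-1) powi (- int (\<gamma> k * \<alpha> l))))
             * ecoch n ?ab (g \<otimes>\<^bsub>G\<^esub> h) (\<lambda>i. \<beta> i + \<kappa> i) \<beta>' y"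
  proof (cases "\<beta>' = (\<lambda>i. \<beta> i + \<kappa> i)")
    case False
    then show ?thesis unfolding step1 by (simp add: ecoch_def)
  next
    case True
    show ?thesis
    proof (cases "\<forall>i. \<alpha> i = 0 \<or> \<gamma> i = 0")
      case D: True
      have U: "U = ?ab"
      proof
        fix i show "U i = \<alpha> i + \<gamma> i"
          using D a01[of i] aout[of i] unfolding U_def by (cases "i \<in> {1..n}") auto
      qed
      have C: "(\<Prod>i\<in>{1..n}. F i) = (\<Prod>l\<in>{1..n}. \<Prod>k\<in>{1..<l}. (- q l k) ^ (\<gamma> k * \<alpha> l))"
      proof (rule prod.cong[OF refl])
        fix l assume l: "l \<in> {1..n}"
        show "F l = (\<Prod>k\<in>{1..<l}. (- q l k) ^ (\<gamma> k * \<alpha> l))"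
        proof (cases "\<alpha> l = 0")
          case True then show ?thesis unfolding F_def by simp
        next
          case False
          then have "\<alpha> l = 1" "\<gamma> l = 0" using a01[of l] D[rule_format, of l] by auto
          then show ?thesis unfolding F_def by simp
        qed
      qed
      have E: "(\<Prod>l\<in>{1..n}. \<chi> g l ^ \<gamma> l *
                 (\<Prod>k\<in>{1..<l}. q k l powi (int (\<kappa> k * \<beta> l) - int (\<gamma> k * \<alpha> l))
                               * (-1) powi (- int (\<gamma> k * \<alpha> l))))
          = ?X * (\<Prod>l\<in>{1..n}. \<Prod>k\<in>{1..<l}. q k l ^ (\<kappa> k * \<beta> l) * (- q l k) ^ (\<gamma> k * \<alpha> l))"
        unfolding prod.distrib[symmetric]
      proof (rule prod.cong[OF refl])
        fix l assume l: "l \<in> {1..n}"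
        have "(\<Prod>k\<in>{1..<l}. q k l powi (int (\<kappa> k * \<beta> l) - int (\<gamma> k * \<alpha> l))
                               * (-1) powi (- int (\<gamma> k * \<alpha> l)))
             = (\<Prod>k\<in>{1..<l}. q k l ^ (\<kappa> k * \<beta> l) * (- q l k) ^ (\<gamma> k * \<alpha> l))"
        proof (rule prod.cong[OF refl])
          fix k assume k: "k \<in> {1..<l}"
          then have kn: "k \<in> {1..n}" using l by auto
          show "q k l powi (int (\<kappa> k * \<beta> l) - int (\<gamma> k * \<alpha> l)) * (-1) powi (- int (\<gamma> k * \<alpha> l))
               = q k l ^ (\<kappa> k * \<beta> l) * (- q l k) ^ (\<gamma> k * \<alpha> l)"
            using elem_id[OF q_nz[OF kn l], of "\<kappa> k * \<beta> l" "\<gamma> k * \<alpha> l"] q_inv[OF kn l] by simp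
        qed
        then show "\<chi> g l ^ \<gamma> l *
                 (\<Prod>k\<in>{1..<l}. q k l powi (int (\<kappa> k * \<beta> l) - int (\<gamma> k * \<alpha> l))
                               * (-1) powi (- int (\<gamma> k * \<alpha> l)))
            = \<chi> g l ^ \<gamma> l * (\<Prod>k\<in>{1..<l}. q k l ^ (\<kappa> k * \<beta> l) * (- q l k) ^ (\<gamma> k * \<alpha> l))"
          by simp
      qed
      have PD: "(\<Prod>l\<in>{1..n}. \<Prod>k\<in>{1..<l}. q k l ^ (\<kappa> k * \<beta> l) * (- q l k) ^ (\<gamma> k * \<alpha> l))
          = ?P * (\<Prod>l\<in>{1..n}. \<Prod>k\<in>{1..<l}. (- q l k) ^ (\<gamma> k * \<alpha> l))"
        by (simp only: prod.distrib)
      show ?thesis unfolding step1 bp E PD C[symmetric] U using True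
        by (simp add: ecoch_def mult_ac)
    next
      case ND: False
      then obtain i where i: "\<alpha> i \<noteq> 0" "\<gamma> i \<noteq> 0" by blast
      have iin: "i \<in> {1..n}" using aout(1)[of i] i(1) by blast
      have "F i = 0" using i unfolding F_def by simp
      then have C0: "(\<Prod>i\<in>{1..n}. F i) = 0" using iin by (intro prod_zero) auto
      have "\<not> ?ab i \<le> 1" using i by simp
      then have "?ab \<notin> bits n" unfolding bits_def by blast
      then have X0: "xb n ?ab (g \<otimes>\<^bsub>G\<^esub> h) y = 0" unfolding xb_def by (cases y) simp
      have L: "cup G n q \<chi> (ecoch n \<alpha> g \<beta>) (ecoch n \<gamma> h \<kappa>) \<beta>' y = 0"
        unfolding step1 bp C0 by simp
      have R: "ecoch n ?ab (g \<otimes>\<^bsub>G\<^esub> h) (\<lambda>i. \<beta> i + \<kappa> i) \<beta>' y = 0"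
        using True X0 by (simp add: ecoch_def)
      show ?thesis unfolding L R by simp
    qed
  qed
qed

end
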